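(* Let $k$ be a positive integer. In the perfect matching polytope of $K_{2k}$, the vertex set of any facet with the maximum number of vertices is the set of (characteristic vectors of) perfect matchings that do not contain some given edge $e$ of $K_{2k}$.
   Context: A perfect matching of $K_{2k}$ is a set of $k$ pairwise vertex-disjoint edges. The perfect matching polytope of $K_{2k}$ is the convex hull in $\mathbb{R}^{\binom{2k}{2}}$ (coordinates indexed by edges) of the characteristic vectors of all perfect matchings of $K_{2k}$; its vertices are exactly these characteristic vectors. A facet is a maximal proper face, and the size of a facet is its number of vertices. *)

theory Defs
  imports "HOL-Analysis.Analysis"
begin

text \<open>Vertices of the complete graph are the elements of a finite type 'v
  (so K_{2k} with 2k = CARD('v)).
  Coordinates are indexed by the type 'v set; only the coordinates at edges
  can be nonzero on the polytope.\<close>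

definition edges_K :: "'v set set" where
  "edges_K = {e. card e = 2}"

definition perfect_matching :: "'v::finite set set \<Rightarrow> bool" where
  "perfect_matching M \<longleftrightarrow> M \<subseteq> edges_K \<and> card M = CARD('v) div 2 \<and>
     (\<forall>e\<in>M. \<forall>f\<in>M. e \<noteq> f \<longrightarrow> e \<inter> f = {})"

definition char_vec :: "'v::finite set set \<Rightarrow> real ^ ('v set)" where
  "char_vec M = (\<chi> e. if e \<in> M then 1 else 0)"

definition pm_vertices :: "(real ^ ('v::finite set)) set" where
  "pm_vertices = char_vec ` {M. perfect_matching M}"

definition pm_polytope :: "(real ^ ('v::finite set)) set" where
  "pm_polytope = convex hull pm_vertices"

definition is_facet :: "'a::real_vector set \<Rightarrow> 'a set \<Rightarrow> bool" where
  "is_facet F P \<longleftrightarrow> F face_of P \<and> F \<noteq> P \<and>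
     (\<forall>G. G face_of P \<and> G \<noteq> P \<and> F \<subseteq> G \<longrightarrow> G = F)"

definition face_vertices :: "(real ^ ('v::finite set)) set \<Rightarrow> (real ^ ('v set)) set" where
  "face_vertices F = F \<inter> pm_vertices"

end

theory Submission
  imports Defs
begin
definition pmo :: "'a set \<Rightarrow> 'a set set \<Rightarrow> bool" where
  "pmo S M \<longleftrightarrow> (\<forall>e\<in>M. card e = 2 \<and> e \<subseteq> S) \<and> (\<forall>e\<in>M. \<forall>f\<in>M. e \<noteq> f \<longrightarrow> e \<inter> f = {}) \<and> \<Union>M = S"

definition PMs :: "'a set \<Rightarrow> 'a set set set" where "PMs S = {M. pmo S M}"

fun pc :: "nat \<Rightarrow> nat" where "pc 0 = 1" | "pc (Suc n) = (2*n+1) * pc n"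

lemma pc_pos: "0 < pc n" by (induction n) auto

lemma pmo_sub: "pmo S M \<Longrightarrow> M \<subseteq> Pow S" unfolding pmo_def by auto

lemma finite_PMs: "finite S \<Longrightarrow> finite (PMs S)"
  by (rule finite_subset[of _ "Pow (Pow S)"]) (auto simp: PMs_def dest: pmo_sub)

lemma pmo_finite: "finite S \<Longrightarrow> pmo S M \<Longrightarrow> finite M"
  by (meson finite_Pow_iff finite_subset pmo_sub)

lemma PMs_empty: "PMs {} = {{}}"
proof -
  have "pmo {} M \<longleftrightarrow> M = {}" for M :: "'a set set"
  proof
    assume "pmo {} M"
    then have "\<forall>e\<in>M. card e = 2 \<and> e \<subseteq> {}" unfolding pmo_def by simp
    then have "\<forall>e\<in>M. card e = 2 \<and> e = {}" by simp
    then show "M = {}" by force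
  qed (simp add: pmo_def)
  then show ?thesis by (auto simp: PMs_def)
qed

lemma pmo_ins:
  assumes "pmo (S - e) N" "e \<subseteq> S" "card e = 2"
  shows "pmo S (insert e N)" "e \<notin> N"
proof -
  have ne: "e \<noteq> {}" using assms(3) by auto
  show "e \<notin> N"
  proof
    assume "e \<in> N" then have "e \<subseteq> S - e" using assms(1) unfolding pmo_def by auto
    with ne show False by auto
  qed
  have N: "\<forall>f\<in>N. card f = 2 \<and> f \<subseteq> S - e" "\<forall>f\<in>N. \<forall>g\<in>N. f \<noteq> g \<longrightarrow> f \<inter> g = {}" "\<Union>N = S - e"
    using assms(1) unfolding pmo_def by auto
  show "pmo S (insert e N)" unfolding pmo_def
  proof (intro conjI)
    show "\<forall>f\<in>insert e N. card f = 2 \<and> f \<subseteq> S" using N(1) assms by auto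
    show "\<forall>f\<in>insert e N. \<forall>g\<in>insert e N. f \<noteq> g \<longrightarrow> f \<inter> g = {}"
      using N(1,2) by fast
    show "\<Union>(insert e N) = S" using N(3) assms(2) by auto
  qed
qed

lemma pmo_del:
  assumes "pmo S M" "e \<in> M"
  shows "pmo (S - e) (M - {e})"
proof -
  have M: "\<forall>f\<in>M. card f = 2 \<and> f \<subseteq> S" "\<forall>f\<in>M. \<forall>g\<in>M. f \<noteq> g \<longrightarrow> f \<inter> g = {}" "\<Union>M = S"
    using assms(1) unfolding pmo_def by auto
  have d: "\<forall>f\<in>M - {e}. f \<inter> e = {}" using M(2) assms(2) by blast
  show ?thesis unfolding pmo_def
  proof (intro conjI)
    show "\<forall>f\<in>M - {e}. card f = 2 \<and> f \<subseteq> S - e" using M(1) d by blast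
    show "\<forall>f\<in>M - {e}. \<forall>g\<in>M - {e}. f \<noteq> g \<longrightarrow> f \<inter> g = {}" using M(2) by blast
    show "\<Union>(M - {e}) = S - e"
    proof
      show "\<Union>(M - {e}) \<subseteq> S - e" using M(1) d by blast
      show "S - e \<subseteq> \<Union>(M - {e})" using M(3) by blast
    qed
  qed
qed

lemma pmo_edge: "pmo S M \<Longrightarrow> e \<in> M \<Longrightarrow> card e = 2 \<and> e \<subseteq> S"
  unfolding pmo_def by auto

lemma pmo_partner:
  assumes "pmo S M" "v \<in> S"
  shows "\<exists>u. {v,u} \<in> M \<and> u \<noteq> v \<and> u \<in> S"
proof -
  have "\<Union>M = S" using assms(1) unfolding pmo_def by simp
  then obtain e where e: "e \<in> M" "v \<in> e" using assms(2) by auto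
  then have ce: "card e = 2" "e \<subseteq> S" using pmo_edge assms(1) by auto
  then obtain x y where xy: "e = {x,y}" "x \<noteq> y" by (auto simp: card_2_iff)
  show ?thesis
  proof (cases "v = x")
    case True
    then have "{v,y} \<in> M \<and> y \<noteq> v \<and> y \<in> S" using e(1) xy ce(2) by simp
    then show ?thesis by blast
  next
    case False then have "v = y" using e xy by simp
    then have "{v,x} \<in> M \<and> x \<noteq> v \<and> x \<in> S" using e(1) xy ce(2) by (simp add: insert_commute)
    then show ?thesis by blast
  qed
qed

lemma pmo_uniq:
  assumes "pmo S M" "{v,u} \<in> M" "{v,u'} \<in> M"
  shows "u = u'"
proof (rule ccontr)
  assume "u \<noteq> u'"
  then have "{v,u} \<noteq> {v,u'}" by (simp add: doubleton_eq_iff)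
  moreover have disj: "\<forall>e\<in>M. \<forall>f\<in>M. e \<noteq> f \<longrightarrow> e \<inter> f = {}" using assms(1) unfolding pmo_def by simp
  ultimately have "{v,u} \<inter> {v,u'} = {}" using disj[rule_format, OF assms(2) assms(3)] by simp
  then show False by simp
qed

lemma pmo_uniq_edge:
  assumes "pmo S M" "e \<in> M" "f \<in> M" "x \<in> e" "x \<in> f"
  shows "e = f"
proof -
  have "\<forall>e\<in>M. \<forall>f\<in>M. e \<noteq> f \<longrightarrow> e \<inter> f = {}" using assms(1) unfolding pmo_def by simp
  then show ?thesis using assms(2-5) by blast
qed

definition wt :: "('a set \<Rightarrow> real) \<Rightarrow> 'a set set \<Rightarrow> real" where "wt w M = sum w M"

lemma wt_ins: "finite N \<Longrightarrow> e \<notin> N \<Longrightarrow> wt w (insert e N) = w e + wt w N"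
  by (simp add: wt_def)

definition Cl :: "'a set \<Rightarrow> 'a set \<Rightarrow> 'a set set set" where "Cl S e = {M\<in>PMs S. e \<in> M}"

lemma card_Cl:
  assumes "e \<subseteq> S" "card e = 2"
  shows "card (Cl S e) = card (PMs (S - e))"
proof -
  have "bij_betw (\<lambda>M. M - {e}) (Cl S e) (PMs (S - e))"
  proof (rule bij_betw_byWitness[where f' = "insert e"])
    show "\<forall>a\<in>Cl S e. insert e (a - {e}) = a" by (auto simp: Cl_def)
    show "\<forall>a'\<in>PMs (S - e). insert e a' - {e} = a'"
      using pmo_ins(2)[OF _ assms] by (auto simp: PMs_def)
    show "(\<lambda>M. M - {e}) ` Cl S e \<subseteq> PMs (S - e)"
      using pmo_del by (auto simp: Cl_def PMs_def)
    show "insert e ` PMs (S - e) \<subseteq> Cl S e"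
      using pmo_ins(1)[OF _ assms] by (auto simp: Cl_def PMs_def)
  qed
  then show ?thesis by (rule bij_betw_same_card)
qed

lemma card_PMs: "finite S \<Longrightarrow> card S = 2*n \<Longrightarrow> card (PMs S) = pc n"
proof (induction n arbitrary: S)
  case 0
  then show ?case by (simp add: PMs_empty)
next
  case (Suc n)
  then obtain v where v: "v \<in> S" by fastforce
  have eq: "PMs S = (\<Union>u\<in>S-{v}. Cl S {v,u})"
  proof
    show "PMs S \<subseteq> (\<Union>u\<in>S-{v}. Cl S {v,u})"
    proof
      fix M assume "M \<in> PMs S"
      then obtain u where "{v,u} \<in> M" "u \<noteq> v" "u \<in> S" using pmo_partner v by (fastforce simp: PMs_def)
      then show "M \<in> (\<Union>u\<in>S-{v}. Cl S {v,u})" using \<open>M \<in> PMs S\<close> by (auto simp: Cl_def)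
    qed
  qed (auto simp: Cl_def)
  have "card (PMs S) = (\<Sum>u\<in>S-{v}. card (Cl S {v,u}))"
    unfolding eq
  proof (rule card_UN_disjoint)
    show "finite (S - {v})" using Suc by auto
    show "\<forall>i\<in>S - {v}. finite (Cl S {v, i})" using finite_PMs[OF Suc.prems(1)] by (auto simp: Cl_def)
    show "\<forall>i\<in>S - {v}. \<forall>j\<in>S - {v}. i \<noteq> j \<longrightarrow> Cl S {v, i} \<inter> Cl S {v, j} = {}"
      by (auto simp: Cl_def PMs_def dest: pmo_uniq)
  qed
  also have "\<dots> = (\<Sum>u\<in>S-{v}. pc n)"
  proof (rule sum.cong)
    fix u assume u: "u \<in> S - {v}"
    then have "card (Cl S {v,u}) = card (PMs (S - {v,u}))" using v by (intro card_Cl) auto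
    also have "\<dots> = pc n" using Suc u v by (intro Suc.IH) (auto simp: card_Diff_subset)
    finally show "card (Cl S {v,u}) = pc n" .
  qed simp
  also have "\<dots> = (2*n+1) * pc n" using Suc v by simp
  finally show ?case by simp
qed

lemma PMs_ne: "finite S \<Longrightarrow> even (card S) \<Longrightarrow> \<exists>M. pmo S M"
proof -
  assume a: "finite S" "even (card S)"
  then have "card (PMs S) > 0" using card_PMs[of S "card S div 2"] pc_pos[of "card S div 2"] by simp
  then have "PMs S \<noteq> {}" by (metis card.empty less_irrefl)
  then show ?thesis by (auto simp: PMs_def)
qed

lemma card_Cl2: "finite S \<Longrightarrow> card S = 2*Suc n \<Longrightarrow> a \<in> S \<Longrightarrow> b \<in> S \<Longrightarrow> a \<noteq> b \<Longrightarrow> card (Cl S {a,b}) = pc n"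
  by (subst card_Cl) (auto intro!: card_PMs simp: card_Diff_subset)


lemma pmo_share: "pmo S M \<Longrightarrow> {p,q} \<in> M \<Longrightarrow> {r,q} \<in> M \<Longrightarrow> p = r"
  using pmo_uniq[of S M q p r] by (simp add: insert_commute)

lemma pmo_del2:
  assumes "pmo S M" "e \<in> M" "f \<in> M" "e \<noteq> f"
  shows "pmo (S - e - f) (M - {e,f})"
proof -
  have "pmo (S - e) (M - {e})" using pmo_del assms by blast
  moreover have "f \<in> M - {e}" using assms by auto
  ultimately have "pmo (S - e - f) (M - {e} - {f})" using pmo_del by blast
  moreover have "M - {e} - {f} = M - {e,f}" by auto
  ultimately show ?thesis by simp
qed

lemma card2: "p \<noteq> q \<Longrightarrow> card {p,q} = 2" by simp

lemma pmo_ins2: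
  assumes "pmo (S - {p,q} - {r,s}) N" "p \<in> S" "q \<in> S" "r \<in> S" "s \<in> S" "distinct [p,q,r,s]"
  shows "pmo S (insert {p,q} (insert {r,s} N))" "{r,s} \<notin> N" "{p,q} \<notin> insert {r,s} N"
proof -
  have a: "{r,s} \<subseteq> S - {p,q}" using assms by auto
  show "{r,s} \<notin> N" using pmo_ins(2)[OF assms(1) a card2] assms(6) by auto
  have b: "pmo (S - {p,q}) (insert {r,s} N)" using pmo_ins(1)[OF assms(1) a card2] assms(6) by auto
  show "{p,q} \<notin> insert {r,s} N" using pmo_ins(2)[OF b _ card2] assms by auto
  show "pmo S (insert {p,q} (insert {r,s} N))" using pmo_ins(1)[OF b _ card2] assms by auto
qed

lemma pmo_swap:
  assumes "finite S" "pmo S M" "{p,q} \<in> M" "{r,s} \<in> M" "distinct [p,q,r,s]"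
  defines "N \<equiv> M - {{p,q},{r,s}}"
  shows "pmo S (insert {p,r} (insert {q,s} N))"
    "wt w (insert {p,r} (insert {q,s} N)) + w {p,q} + w {r,s} = wt w M + w {p,r} + w {q,s}"
proof -
  have ne: "{p,q} \<noteq> {r,s}" using assms(5) by (auto simp: doubleton_eq_iff)
  have N: "pmo (S - {p,q} - {r,s}) N" unfolding N_def using pmo_del2[OF assms(2-4) ne] .
  have S: "p \<in> S" "q \<in> S" "r \<in> S" "s \<in> S" using pmo_edge[OF assms(2)] assms(3,4) by auto
  have eqS: "S - {p,r} - {q,s} = S - {p,q} - {r,s}" by auto
  have N2: "pmo (S - {p,r} - {q,s}) N" using N eqS by simp
  have d2: "distinct [p,r,q,s]" using assms(5) by auto
  show "pmo S (insert {p,r} (insert {q,s} N))" using pmo_ins2(1)[OF N2 S(1,3,2,4) d2] .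
  have fN: "finite N" using pmo_finite[OF _ N] assms(1) by auto
  have M: "M = insert {p,q} (insert {r,s} N)" unfolding N_def using assms(3,4) by auto
  have "wt w M = w {p,q} + w {r,s} + wt w N"
    using M pmo_ins2(2,3)[OF N S assms(5)] fN by (simp add: wt_ins)
  moreover have "wt w (insert {p,r} (insert {q,s} N)) = w {p,r} + w {q,s} + wt w N"
    using pmo_ins2(2,3)[OF N2 S(1,3,2,4) d2] fN by (simp add: wt_ins)
  ultimately show "wt w (insert {p,r} (insert {q,s} N)) + w {p,q} + w {r,s} = wt w M + w {p,r} + w {q,s}"
    by simp
qed

lemma ex2:
  assumes "finite S" "even (card S)" "p \<in> S" "q \<in> S" "r \<in> S" "s \<in> S" "distinct [p,q,r,s]"
  shows "\<exists>M\<in>PMs S. {p,q} \<in> M \<and> {r,s} \<in> M"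
proof -
  have c4: "card {p,q,r,s} = 4" using assms(7) by simp
  have sub: "{p,q,r,s} \<subseteq> S" using assms(3-6) by simp
  have eq: "S - {p,q} - {r,s} = S - {p,q,r,s}" by blast
  have "card (S - {p,q} - {r,s}) = card S - 4"
    unfolding eq using card_Diff_subset[OF _ sub] c4 by simp
  moreover have "card S \<ge> 4" using card_mono[OF assms(1) sub] c4 by simp
  ultimately have "even (card (S - {p,q} - {r,s}))" using assms(2) by simp
  moreover have "finite (S - {p,q} - {r,s})" using assms(1) by simp
  ultimately obtain N where N: "pmo (S - {p,q} - {r,s}) N" using PMs_ne by blast
  have "pmo S (insert {p,q} (insert {r,s} N))" by (rule pmo_ins2(1)[OF N assms(3-7)])
  then have "insert {p,q} (insert {r,s} N) \<in> PMs S" by (simp add: PMs_def)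
  moreover have "{p,q} \<in> insert {p,q} (insert {r,s} N) \<and> {r,s} \<in> insert {p,q} (insert {r,s} N)" by simp
  ultimately show ?thesis by (rule bexI[rotated])
qed

lemma ex3:
  assumes "finite S" "even (card S)" "p \<in> S" "q \<in> S" "r \<in> S" "s \<in> S" "t \<in> S" "u \<in> S"
    "distinct [p,q,r,s,t,u]"
  shows "\<exists>M\<in>PMs S. {p,q} \<in> M \<and> {r,s} \<in> M \<and> {t,u} \<in> M"
proof -
  have "even (card (S - {p,q}))" using assms by (simp add: card_Diff_subset)
  moreover have "card (S - {p,q}) = card S - 2" using assms by (simp add: card_Diff_subset)
  ultimately obtain M' where M': "M' \<in> PMs (S - {p,q})" "{r,s} \<in> M'" "{t,u} \<in> M'"
    using ex2[of "S - {p,q}" r s t u] assms by auto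
  then have "pmo (S - {p,q}) M'" by (simp add: PMs_def)
  have "pmo S (insert {p,q} M')"
    using pmo_ins(1)[OF \<open>pmo (S - {p,q}) M'\<close> _ card2] assms by auto
  then show ?thesis using M' by (auto simp: PMs_def)
qed


lemma pmo_partner': "pmo S M \<Longrightarrow> v \<in> S \<Longrightarrow> (\<And>u. {v,u} \<in> M \<Longrightarrow> u \<noteq> v \<Longrightarrow> u \<in> S \<Longrightarrow> thesis) \<Longrightarrow> thesis"
  using pmo_partner by metis

lemma edge_comm: "{a,b} = {b,a}" by (rule insert_commute)

lemma B_big:
  fixes w :: "'a set \<Rightarrow> real"
  assumes fin: "finite S" and cS: "card S = 2*Suc n"
    and le: "\<forall>M\<in>PMs S. wt w M \<le> W"
    and cls: "\<forall>p\<in>S. \<forall>q\<in>S. p \<noteq> q \<longrightarrow> (\<exists>M\<in>PMs S. {p,q} \<in> M \<and> wt w M = W)"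
    and vS: "v \<in> S" and aS: "a \<in> S" and bS: "b \<in> S" and dvab: "distinct [v,a,b]"
    and Da: "\<forall>M\<in>PMs S. {v,a} \<in> M \<longrightarrow> wt w M = W"
    and Db: "\<forall>M\<in>PMs S. {v,b} \<in> M \<longrightarrow> wt w M = W"
    and M0: "M0 \<in> PMs S" "wt w M0 < W"
  shows "pc n < card {M\<in>PMs S. wt w M < W}"
proof -
  define R0 where "R0 = S - {v,a,b}"
  define cf where "cf x z = w{v,x} + W - w{v,b} + w{b,z} - w{x,z}" for x z
  define df where "df x = w{v,x} + W - w{v,a} + w{a,b} - w{x,b}" for x
  have ev: "even (card S)" using cS by simp
  have R0: "x \<in> R0 \<longleftrightarrow> x \<in> S \<and> x \<noteq> v \<and> x \<noteq> a \<and> x \<noteq> b" for x unfolding R0_def by simp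
  have cR0: "card R0 = 2*n - 1"
  proof -
    have "card {v,a,b} = 3" using dvab by simp
    moreover have "{v,a,b} \<subseteq> S" using vS aS bS by simp
    ultimately show ?thesis unfolding R0_def using card_Diff_subset[of "{v,a,b}" S] cS by simp
  qed
  have finR0: "finite R0" using fin unfolding R0_def by simp
  have SW: "wt w M = w{v,x} + W - w{v,d} + w{d,z} - w{x,z}"
    if "M \<in> PMs S" "{v,x}\<in>M" "{d,z}\<in>M" "distinct [v,x,d,z]" "\<forall>M\<in>PMs S. {v,d}\<in>M \<longrightarrow> wt w M = W" for M x d z
  proof -
    have p: "pmo S M" using that(1) by (simp add: PMs_def)
    note sw = pmo_swap(1)[OF fin p that(2,3,4)] pmo_swap(2)[OF fin p that(2,3,4), of w]
    have "{v,d} \<in> insert {v,d} (insert {x,z} (M - {{v,x},{d,z}}))" by simp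
    moreover have "insert {v,d} (insert {x,z} (M - {{v,x},{d,z}})) \<in> PMs S" using sw(1) by (simp add: PMs_def)
    ultimately have "wt w (insert {v,d} (insert {x,z} (M - {{v,x},{d,z}}))) = W" using that(5) by simp
    then show ?thesis using sw(2) by simp
  qed
  have F1: "wt w M = cf x z" if "M\<in>PMs S" "{v,x}\<in>M" "{b,z}\<in>M" "distinct [v,x,b,z]" for M x z
    using SW[OF that Db] by (simp add: cf_def)
  have F1a: "wt w M = df x" if "M\<in>PMs S" "{v,x}\<in>M" "{a,b}\<in>M" "x \<in> R0" for M x
  proof -
    have "distinct [v,x,a,b]" using that(4) dvab R0 by auto
    then show ?thesis using SW[OF that(1,2,3) _ Da] by (simp add: df_def)
  qed
  have swap_eq: "w{b,y} + w{y',x} = w{b,y'} + w{y,x}"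
    if h: "x\<in>R0" "y\<in>R0" "y'\<in>R0" "distinct [x,y,y']" for x y y'
  proof -
    have d6: "distinct [v,a,b,y,x,y']" using h dvab R0 by auto
    obtain M1 where M1: "M1\<in>PMs S" "{v,a}\<in>M1" "{b,y}\<in>M1" "{x,y'}\<in>M1"
      using ex3[OF fin ev vS aS bS, of y x y'] h d6 R0 by auto
    have p: "pmo S M1" using M1 by (simp add: PMs_def)
    have d: "distinct [b,y,y',x]" using d6 by auto
    have e2: "{y',x} \<in> M1" using M1(4) by (simp add: edge_comm)
    note sw = pmo_swap(1)[OF fin p M1(3) e2 d] pmo_swap(2)[OF fin p M1(3) e2 d, of w]
    have ne1: "{v,a} \<noteq> {b,y}" "{v,a} \<noteq> {y',x}" using d6 by (auto simp: doubleton_eq_iff)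
    have "{v,a} \<in> insert {b,y'} (insert {y,x} (M1 - {{b,y},{y',x}}))" using M1(2) ne1 by simp
    moreover have "insert {b,y'} (insert {y,x} (M1 - {{b,y},{y',x}})) \<in> PMs S" using sw(1) by (simp add: PMs_def)
    ultimately have "wt w (insert {b,y'} (insert {y,x} (M1 - {{b,y},{y',x}}))) = W" using Da by simp
    moreover have "wt w M1 = W" using Da M1(1,2) by simp
    ultimately show ?thesis using sw(2) by simp
  qed
  have F3: "cf x z = cf x z'" if "x\<in>R0" "z\<in>R0" "z'\<in>R0" "distinct [x,z,z']" for x z z'
  proof -
    have "w{b,z} + w{z',x} = w{b,z'} + w{z,x}" using swap_eq[OF that] .
    then show ?thesis unfolding cf_def by (simp add: edge_comm[of z' x] edge_comm[of z x])
  qed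
  have F4: "df x - cf x z = df x' - cf x' z" if "x\<in>R0" "x'\<in>R0" "z\<in>R0" "distinct [x,x',z]" for x x' z
  proof -
    have "distinct [z,x,x']" using that(4) by auto
    then have "w{b,x} + w{x',z} = w{b,x'} + w{x,z}" using swap_eq[OF that(3,1,2)] by simp
    then show ?thesis unfolding cf_def df_def by (simp add: edge_comm[of x b] edge_comm[of x' b] edge_comm[of x' z] edge_comm[of x z])
  qed
  have F5: "df x \<le> W" if h: "x\<in>R0" for x
  proof -
    have d: "distinct [v,x,a,b]" using h dvab R0 by auto
    obtain M where "M\<in>PMs S" "{v,x}\<in>M" "{a,b}\<in>M" using ex2[OF fin ev vS _ aS bS d] h R0 by auto
    then show ?thesis using F1a[of M x] h le by force
  qed
  have F6: "cf x z \<le> W" if h: "x\<in>R0" "z\<in>R0" "y\<in>R0" "distinct [x,z,y]" for x z y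
  proof -
    have d: "distinct [v,x,b,z,a,y]" using h dvab R0 by auto
    obtain M where M: "M\<in>PMs S" "{v,x}\<in>M" "{b,z}\<in>M" using ex3[OF fin ev vS _ bS _ aS, of x z y] h d R0 by auto
    have "distinct [v,x,b,z]" using d by simp
    then show ?thesis using F1[OF M] M(1) le by force
  qed
  have pM0: "pmo S M0" using M0(1) by (simp add: PMs_def)
  have notDa: "{v,a} \<notin> M" if "M \<in> PMs S" "wt w M < W" for M using Da that by force
  have notDb: "{v,b} \<notin> M" if "M \<in> PMs S" "wt w M < W" for M using Db that by force
  obtain x0 where x0: "{v,x0} \<in> M0" "x0 \<noteq> v" "x0 \<in> S" using pmo_partner'[OF pM0 vS] by blast
  have x0R: "x0 \<in> R0" using x0 notDa[OF M0] notDb[OF M0] R0 by auto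
  obtain y0 where y0: "{a,y0} \<in> M0" "y0 \<noteq> a" "y0 \<in> S" using pmo_partner'[OF pM0 aS] by blast
  have y0v: "y0 \<noteq> v"
  proof
    assume "y0 = v" then have "{v,a} \<in> M0" using y0(1) by (simp add: edge_comm)
    then show False using notDa[OF M0] by simp
  qed
  have y0x0: "y0 \<noteq> x0"
  proof
    assume "y0 = x0" then have "a = v" using pmo_share[OF pM0 y0(1)] x0(1) by simp
    then show False using dvab by simp
  qed
  have partner_b: "z \<in> R0 \<and> z \<noteq> x"
    if pM: "pmo S M" and vx: "{v,x} \<in> M" and xR: "x \<in> R0" and bz: "{b,z} \<in> M" and bz': "z \<noteq> b"
      and nab: "{a,b} \<notin> M" for M x z
  proof -
    have "z \<noteq> v"
    proof
      assume "z = v" then have "{v,b} \<in> M" using bz by (simp add: edge_comm)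
      then have "b = x" using pmo_uniq[OF pM _ vx] by simp
      then show False using xR R0 by simp
    qed
    moreover have "z \<noteq> x"
    proof
      assume "z = x" then have "b = v" using pmo_share[OF pM bz] vx by simp
      then show False using dvab by simp
    qed
    moreover have "z \<noteq> a"
    proof
      assume "z = a" then have "{a,b} \<in> M" using bz by (simp add: edge_comm)
      then show False using nab by simp
    qed
    moreover have "z \<in> S" using pmo_edge[OF pM bz] by simp
    ultimately show ?thesis using R0 bz' by simp
  qed
  have partner_a: "y \<noteq> v \<and> y \<noteq> x"
    if pM: "pmo S M" and vx: "{v,x} \<in> M" and xR: "x \<in> R0" and ay: "{a,y} \<in> M" for M x y
  proof -
    have "y \<noteq> v"
    proof
      assume "y = v" then have "{v,a} \<in> M" using ay by (simp add: edge_comm)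
      then have "a = x" using pmo_uniq[OF pM _ vx] by simp
      then show False using xR R0 by simp
    qed
    moreover have "y \<noteq> x"
    proof
      assume "y = x" then have "a = v" using pmo_share[OF pM ay] vx by simp
      then show False using dvab by simp
    qed
    ultimately show ?thesis by simp
  qed
  have cR0_3: "card R0 \<ge> 3" if "card R0 \<ge> 2"
    using that cR0 by presburger
  have pick: "\<exists>z\<in>R0. z \<noteq> p \<and> z \<noteq> q" if "card R0 \<ge> 3" for p q
  proof (rule ccontr)
    assume "\<not> ?thesis"
    then have "R0 \<subseteq> {p,q}" by auto
    then have "card R0 \<le> card {p,q}" by (rule card_mono[rotated]) simp
    also have "\<dots> \<le> 2" by (simp add: card_insert_le_m1)
    finally show False using that by simp
  qed
  have dxz: "distinct [v,x,b,z]" if "x \<in> R0" "z \<in> R0" "z \<noteq> x" for x z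
  proof -
    have "x \<in> S \<and> x \<noteq> v \<and> x \<noteq> a \<and> x \<noteq> b" "z \<in> S \<and> z \<noteq> v \<and> z \<noteq> a \<and> z \<noteq> b"
      using that(1,2) R0 by blast+
    then show ?thesis using that(3) dvab by auto
  qed
  have two: "card R0 \<ge> 2" if "p \<in> R0" "q \<in> R0" "p \<noteq> q" for p q
  proof -
    have "{p,q} \<subseteq> R0" using that by simp
    then have "card {p,q} \<le> card R0" by (rule card_mono[OF finR0])
    then show ?thesis using that(3) by simp
  qed
  show ?thesis
  proof (cases "y0 = b")
    case True
    then have ab0: "{a,b} \<in> M0" using y0(1) by simp
    have "df x0 < W" using F1a[OF M0(1) x0(1) ab0 x0R] M0(2) by simp
    obtain M1 where M1: "M1 \<in> PMs S" "{v,x0} \<in> M1" "wt w M1 = W"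
      using cls[rule_format, OF vS x0(3)] x0(2) by auto
    have pM1: "pmo S M1" using M1 by (simp add: PMs_def)
    obtain y1 where y1: "{a,y1} \<in> M1" "y1 \<noteq> a" "y1 \<in> S" using pmo_partner'[OF pM1 aS] by blast
    have y1b: "y1 \<noteq> b"
    proof
      assume "y1 = b" then have "wt w M1 = df x0" using F1a[OF M1(1,2) _ x0R] y1(1) by simp
      then show False using M1(3) \<open>df x0 < W\<close> by simp
    qed
    have nab1: "{a,b} \<notin> M1"
    proof
      assume "{a,b} \<in> M1" then have "b = y1" using pmo_uniq[OF pM1 _ y1(1)] by simp
      then show False using y1b by simp
    qed
    obtain z1 where z1: "{b,z1} \<in> M1" "z1 \<noteq> b" "z1 \<in> S" using pmo_partner'[OF pM1 bS] by blast
    have z1R': "z1 \<in> R0 \<and> z1 \<noteq> x0" by (rule partner_b[OF pM1 M1(2) x0R z1(1,2) nab1])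
    have z1R: "z1 \<in> R0" "z1 \<noteq> x0" using z1R' by simp_all
    have "wt w M1 = cf x0 z1" using F1[OF M1(1,2) z1(1) dxz[OF x0R z1R]] .
    then have cf01: "cf x0 z1 = W" using M1(3) by simp
    obtain M2 where M2: "M2 \<in> PMs S" "{a,b} \<in> M2" "wt w M2 = W"
      using cls[rule_format, OF aS bS] dvab by auto
    have pM2: "pmo S M2" using M2 by (simp add: PMs_def)
    obtain x2 where x2: "{v,x2} \<in> M2" "x2 \<noteq> v" "x2 \<in> S" using pmo_partner'[OF pM2 vS] by blast
    have x2R: "x2 \<in> R0"
    proof -
      have "x2 \<noteq> a"
      proof
        assume "x2 = a" then have "{a,v} \<in> M2" using x2(1) by (simp add: edge_comm)
        then have "v = b" using pmo_uniq[OF pM2 _ M2(2)] by simp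
        then show False using dvab by simp
      qed
      moreover have "x2 \<noteq> b"
      proof
        assume "x2 = b" then have "v = a" using pmo_share[OF pM2 x2(1)] M2(2) by simp
        then show False using dvab by simp
      qed
      ultimately show ?thesis using x2 R0 by simp
    qed
    have "df x2 = W" using F1a[OF M2(1) x2(1) M2(2) x2R] M2(3) by simp
    have x20: "x2 \<noteq> x0" using \<open>df x2 = W\<close> \<open>df x0 < W\<close> by auto
    have c3: "card R0 \<ge> 3" using cR0_3 two[OF x0R x2R x20[symmetric]] by simp
    obtain z where z: "z \<in> R0" "z \<noteq> x0" "z \<noteq> x2" using pick[OF c3] by blast
    have "cf x0 z = W"
    proof (cases "z = z1")
      case True then show ?thesis using cf01 by simp
    next
      case False then show ?thesis using F3[OF x0R z1R(1) z(1)] z1R z cf01 by simp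
    qed
    moreover have "df x2 - cf x2 z = df x0 - cf x0 z" using F4[OF x2R x0R z(1)] z x20 by simp
    moreover have "cf x2 z \<le> W" using F6[OF x2R z(1) x0R] z x20 by simp
    ultimately show ?thesis using \<open>df x2 = W\<close> \<open>df x0 < W\<close> by simp
  next
    case False
    have y0R: "y0 \<in> R0" using y0 y0v False R0 by simp
    have nab0: "{a,b} \<notin> M0"
    proof
      assume "{a,b} \<in> M0" then have "b = y0" using pmo_uniq[OF pM0 _ y0(1)] by simp
      then show False using False by simp
    qed
    obtain z0 where z0: "{b,z0} \<in> M0" "z0 \<noteq> b" "z0 \<in> S" using pmo_partner'[OF pM0 bS] by blast
    have z0R': "z0 \<in> R0 \<and> z0 \<noteq> x0" by (rule partner_b[OF pM0 x0(1) x0R z0(1,2) nab0])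
    have z0R: "z0 \<in> R0" "z0 \<noteq> x0" using z0R' by simp_all
    have z0y0: "z0 \<noteq> y0"
    proof
      assume "z0 = y0" then have "b = a" using pmo_share[OF pM0 z0(1)] y0(1) by simp
      then show False using dvab by simp
    qed
    have wM0: "wt w M0 = cf x0 z0" using F1[OF M0(1) x0(1) z0(1) dxz[OF x0R z0R]] .
    have c3: "card R0 \<ge> 3"
    proof -
      have "{x0,y0,z0} \<subseteq> R0" using x0R y0R z0R by simp
      moreover have "card {x0,y0,z0} = 3" using y0x0 z0R z0y0 by auto
      ultimately show ?thesis using card_mono[OF finR0, of "{x0,y0,z0}"] by simp
    qed
    have n2: "n \<ge> 2" using c3 cR0 by simp
    obtain M1 where M1: "M1 \<in> PMs S" "{v,x0} \<in> M1" "wt w M1 = W"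
      using cls[rule_format, OF vS x0(3)] x0(2) by auto
    have pM1: "pmo S M1" using M1 by (simp add: PMs_def)
    obtain y1 where y1: "{a,y1} \<in> M1" "y1 \<noteq> a" "y1 \<in> S" using pmo_partner'[OF pM1 aS] by blast
    have y1b: "y1 = b"
    proof (rule ccontr)
      assume y1b: "y1 \<noteq> b"
      have nab1: "{a,b} \<notin> M1"
      proof
        assume "{a,b} \<in> M1" then have "b = y1" using pmo_uniq[OF pM1 _ y1(1)] by simp
        then show False using y1b by simp
      qed
      obtain z1 where z1: "{b,z1} \<in> M1" "z1 \<noteq> b" "z1 \<in> S" using pmo_partner'[OF pM1 bS] by blast
      have z1R': "z1 \<in> R0 \<and> z1 \<noteq> x0" by (rule partner_b[OF pM1 M1(2) x0R z1(1,2) nab1])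
      have z1R: "z1 \<in> R0" "z1 \<noteq> x0" using z1R' by simp_all
      have "wt w M1 = cf x0 z1" using F1[OF M1(1,2) z1(1) dxz[OF x0R z1R]] .
      moreover have "cf x0 z1 = cf x0 z0"
      proof (cases "z1 = z0")
        case False then show ?thesis using F3[OF x0R z1R(1) z0R(1)] z1R z0R by simp
      qed simp
      ultimately show False using M1(3) wM0 M0(2) by simp
    qed
    have dfx0: "df x0 = W" using F1a[OF M1(1,2) _ x0R] y1(1) y1b M1(3) by simp
    have gap: "cf x0 z0 < W" using wM0 M0(2) by simp
    have inZ: "wt w M < W" if M: "M \<in> PMs S" "{v,a} \<notin> M" "{v,b} \<notin> M" "{a,b} \<notin> M" for M
    proof -
      have pM: "pmo S M" using M by (simp add: PMs_def)
      obtain x where x: "{v,x} \<in> M" "x \<noteq> v" "x \<in> S" using pmo_partner'[OF pM vS] by blast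
      have xR: "x \<in> R0" using x M R0 by auto
      obtain z where z: "{b,z} \<in> M" "z \<noteq> b" "z \<in> S" using pmo_partner'[OF pM bS] by blast
      have zR': "z \<in> R0 \<and> z \<noteq> x" by (rule partner_b[OF pM x(1) xR z(1,2) M(4)])
      have zR: "z \<in> R0" "z \<noteq> x" using zR' by simp_all
      have wM: "wt w M = cf x z" using F1[OF M(1) x(1) z(1) dxz[OF xR zR]] .
      obtain z' where z': "z' \<in> R0" "z' \<noteq> x" "z' \<noteq> x0" using pick[OF c3] by blast
      have e1: "cf x z = cf x z'"
      proof (cases "z = z'")
        case False then show ?thesis using F3[OF xR zR(1) z'(1)] zR z' by simp
      qed simp
      have e2: "df x - cf x z' = df x0 - cf x0 z'"
      proof (cases "x = x0")
        case False then show ?thesis using F4[OF xR x0R z'(1)] z' by simp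
      qed simp
      have e3: "cf x0 z' = cf x0 z0"
      proof (cases "z' = z0")
        case False then show ?thesis using F3[OF x0R z'(1) z0R(1)] z' z0R by simp
      qed simp
      show ?thesis using wM e1 e2 e3 dfx0 gap F5[OF xR] by simp
    qed
    define X where "X = Cl S {v,a} \<union> Cl S {v,b} \<union> Cl S {a,b}"
    have sub: "PMs S - X \<subseteq> {M\<in>PMs S. wt w M < W}"
    proof
      fix M assume "M \<in> PMs S - X"
      then have "M \<in> PMs S" "{v,a} \<notin> M" "{v,b} \<notin> M" "{a,b} \<notin> M" unfolding X_def Cl_def by simp_all
      then show "M \<in> {M\<in>PMs S. wt w M < W}" using inZ by simp
    qed
    have cX: "card X \<le> 3 * pc n"
    proof -
      have "card X \<le> card (Cl S {v,a}) + card (Cl S {v,b}) + card (Cl S {a,b})"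
        unfolding X_def by (meson card_Un_le add_le_mono order_trans le_refl)
      moreover have "card (Cl S {v,a}) = pc n" using card_Cl2[OF fin cS vS aS] dvab by simp
      moreover have "card (Cl S {v,b}) = pc n" using card_Cl2[OF fin cS vS bS] dvab by simp
      moreover have "card (Cl S {a,b}) = pc n" using card_Cl2[OF fin cS aS bS] dvab by simp
      ultimately show ?thesis by simp
    qed
    have finX: "finite X" unfolding X_def Cl_def using finite_PMs[OF fin] by simp
    have "card (PMs S) - card X \<le> card (PMs S - X)" using diff_card_le_card_Diff[OF finX] .
    also have "\<dots> \<le> card {M\<in>PMs S. wt w M < W}"
      using card_mono[OF _ sub] finite_PMs[OF fin] by simp
    finally have "card (PMs S) - card X \<le> card {M\<in>PMs S. wt w M < W}" .
    moreover have "card (PMs S) = (2*n+1) * pc n" using card_PMs[OF fin cS] by simp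
    moreover have "pc n > 0" by (rule pc_pos)
    ultimately have "(2*n+1) * pc n - 3 * pc n \<le> card {M\<in>PMs S. wt w M < W}" using cX by linarith
    moreover have "(2*n+1) * pc n - 3 * pc n = (2*n - 2) * pc n" by (simp add: diff_mult_distrib)
    moreover have "pc n < (2*n - 2) * pc n" using n2 \<open>pc n > 0\<close> by simp
    ultimately show ?thesis by linarith
  qed
qed


lemma PMs_two:
  assumes "pmo S M" "S = {v,u}" "v \<noteq> u"
  shows "M = {{v,u}}"
proof -
  have vS: "v \<in> S" using assms by simp
  obtain u' where u': "{v,u'} \<in> M" "u' \<noteq> v" "u' \<in> S" using pmo_partner'[OF assms(1) vS] by blast
  have "u' = u" using u' assms(2) by simp
  then have e: "{v,u} \<in> M" using u' by simp
  have "pmo (S - {v,u}) (M - {{v,u}})" using pmo_del[OF assms(1) e] .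
  moreover have "S - {v,u} = {}" using assms(2) by simp
  ultimately have "M - {{v,u}} \<in> PMs {}" by (simp add: PMs_def)
  then have "M - {{v,u}} = {}" using PMs_empty by (metis singletonD)
  then show ?thesis using e by auto
qed

lemma class_bij:
  fixes w :: "'a set \<Rightarrow> real"
  assumes fin: "finite S" and e: "e \<subseteq> S" "card e = 2"
  shows "card {M\<in>PMs S. wt w M < W \<and> e \<in> M} = card {M'\<in>PMs (S - e). wt w M' < W - w e}"
proof -
  have wins: "wt w (insert e M') = w e + wt w M'" if "pmo (S - e) M'" for M'
    using wt_ins[OF pmo_finite[OF _ that] pmo_ins(2)[OF that e]] fin by simp
  have "bij_betw (\<lambda>M. M - {e}) {M\<in>PMs S. wt w M < W \<and> e \<in> M} {M'\<in>PMs (S - e). wt w M' < W - w e}"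
  proof (rule bij_betw_byWitness[where f' = "insert e"])
    show "\<forall>a\<in>{M\<in>PMs S. wt w M < W \<and> e \<in> M}. insert e (a - {e}) = a" by auto
    show "\<forall>a'\<in>{M'\<in>PMs (S - e). wt w M' < W - w e}. insert e a' - {e} = a'"
      using pmo_ins(2)[OF _ e] by (auto simp: PMs_def)
    show "(\<lambda>M. M - {e}) ` {M\<in>PMs S. wt w M < W \<and> e \<in> M} \<subseteq> {M'\<in>PMs (S - e). wt w M' < W - w e}"
    proof
      fix M' assume "M' \<in> (\<lambda>M. M - {e}) ` {M\<in>PMs S. wt w M < W \<and> e \<in> M}"
      then obtain M where M: "M \<in> PMs S" "wt w M < W" "e \<in> M" "M' = M - {e}" by blast
      have p: "pmo (S - e) M'" using pmo_del M by (simp add: PMs_def)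
      have "M = insert e M'" using M by auto
      then have "wt w M = w e + wt w M'" using wins[OF p] by simp
      then show "M' \<in> {M'\<in>PMs (S - e). wt w M' < W - w e}" using p M(2) by (simp add: PMs_def)
    qed
    show "insert e ` {M'\<in>PMs (S - e). wt w M' < W - w e} \<subseteq> {M\<in>PMs S. wt w M < W \<and> e \<in> M}"
    proof
      fix M assume "M \<in> insert e ` {M'\<in>PMs (S - e). wt w M' < W - w e}"
      then obtain M' where M': "pmo (S - e) M'" "wt w M' < W - w e" "M = insert e M'" by (auto simp: PMs_def)
      then show "M \<in> {M\<in>PMs S. wt w M < W \<and> e \<in> M}"
        using pmo_ins(1)[OF M'(1) e] wins[OF M'(1)] by (simp add: PMs_def)
    qed
  qed
  then show ?thesis by (rule bij_betw_same_card)
qed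

lemma pm_B:
  fixes w :: "'a set \<Rightarrow> real"
  assumes "finite S" "card S = 2*n" "\<forall>M\<in>PMs S. wt w M \<le> W" "\<exists>M\<in>PMs S. wt w M = W"
    "\<forall>p\<in>S. \<forall>q\<in>S. p \<noteq> q \<longrightarrow> (\<exists>M\<in>PMs S. {p,q} \<in> M \<and> wt w M = W)"
    "\<exists>M\<in>PMs S. wt w M < W"
  shows "pc (n - 1) < card {M\<in>PMs S. wt w M < W}"
  using assms
proof (induction n arbitrary: S W)
  case 0
  then have "S = {}" by simp
  then have "PMs S = {{}}" using PMs_empty by simp
  then show ?case using "0.prems"(4,6) by auto
next
  case (Suc n)
  note fin = Suc.prems(1) and cS = Suc.prems(2) and le = Suc.prems(3) and ex = Suc.prems(4)
    and cls = Suc.prems(5)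
  obtain M0 where M0: "M0 \<in> PMs S" "wt w M0 < W" using Suc.prems(6) by blast
  have "S \<noteq> {}" using cS by auto
  then obtain v where vS: "v \<in> S" by blast
  define Z where "Z = {M\<in>PMs S. wt w M < W}"
  show ?case
  proof (cases "n = 0")
    case True
    then have "card (S - {v}) = 1" using cS vS by simp
    then obtain u where u: "S - {v} = {u}" using card_1_singletonE by blast
    then have Svu: "S = {v,u}" "v \<noteq> u" using vS by auto
    obtain M1 where M1: "M1 \<in> PMs S" "wt w M1 = W" using ex by blast
    have p0: "pmo S M0" "pmo S M1" using M0(1) M1(1) by (simp_all add: PMs_def)
    have "M0 = {{v,u}}" by (rule PMs_two[OF p0(1) Svu])
    moreover have "M1 = {{v,u}}" by (rule PMs_two[OF p0(2) Svu])
    ultimately show ?thesis using M0(2) M1(2) by simp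
  next
    case False
    then have n1: "n \<ge> 1" by simp
    define U where "U = {u\<in>S-{v}. \<exists>M\<in>PMs S. {v,u} \<in> M \<and> wt w M < W}"
    show ?thesis
    proof (cases "\<exists>a\<in>S-{v}-U. \<exists>b\<in>S-{v}-U. a \<noteq> b")
      case True
      then obtain a b where ab: "a \<in> S-{v}-U" "b \<in> S-{v}-U" "a \<noteq> b" by blast
      have Dx: "\<forall>M\<in>PMs S. {v,x} \<in> M \<longrightarrow> wt w M = W" if "x \<in> S-{v}-U" for x
      proof (intro ballI impI)
        fix M assume "M \<in> PMs S" "{v,x} \<in> M"
        moreover have "\<not> wt w M < W" using that \<open>M \<in> PMs S\<close> \<open>{v,x} \<in> M\<close> unfolding U_def by auto
        ultimately show "wt w M = W" using le by force
      qed
      have d: "distinct [v,a,b]" using ab by auto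
      show ?thesis using B_big[OF fin cS le cls vS _ _ d Dx[OF ab(1)] Dx[OF ab(2)] M0] ab by simp
    next
      case False
      have finU: "finite U" using fin unfolding U_def by simp
      have "card (S - {v} - U) \<le> 1"
        using False card_le_Suc0_iff_eq[of "S - {v} - U"] fin by auto
      moreover have "card (S - {v}) = card U + card (S - {v} - U)"
      proof -
        have sU: "U \<subseteq> S - {v}" unfolding U_def by blast
        have f1: "finite (S - {v})" using fin by simp
        have "card (S - {v} - U) = card (S - {v}) - card U" by (rule card_Diff_subset[OF finU sU])
        moreover have "card U \<le> card (S - {v})" by (rule card_mono[OF f1 sU])
        ultimately show ?thesis by simp
      qed
      moreover have "card (S - {v}) = 2*n + 1" using cS vS by simp
      ultimately have cU: "card U \<ge> 2*n" by simp
      have per: "pc (n - 1) \<le> card {M\<in>PMs S. wt w M < W \<and> {v,u} \<in> M}" if uU: "u \<in> U" for u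
      proof -
        have uS: "u \<in> S" "u \<noteq> v" using uU unfolding U_def by auto
        define T where "T = S - {v,u}"
        define W' where "W' = W - w {v,u}"
        have e: "{v,u} \<subseteq> S" "card {v,u} = 2" using uS vS by auto
        have eq: "card {M\<in>PMs S. wt w M < W \<and> {v,u} \<in> M} = card {M'\<in>PMs T. wt w M' < W'}"
          unfolding T_def W'_def by (rule class_bij[OF fin e])
        have finT: "finite T" using fin unfolding T_def by simp
        have cT: "card T = 2*n" unfolding T_def using cS e card_Diff_subset[OF _ e(1)] by simp
        have insT: "insert {v,u} M' \<in> PMs S \<and> wt w (insert {v,u} M') = w {v,u} + wt w M'" if "M' \<in> PMs T" for M'
        proof -
          have p: "pmo (S - {v,u}) M'" using that unfolding T_def PMs_def by simp
          show ?thesis using pmo_ins[OF p e] wt_ins[OF pmo_finite[OF _ p]] fin by (simp add: PMs_def)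
        qed
        have leT: "\<forall>M'\<in>PMs T. wt w M' \<le> W'"
        proof
          fix M' assume "M' \<in> PMs T"
          then show "wt w M' \<le> W'" using insT[of M'] le unfolding W'_def by force
        qed
        have exT: "\<exists>M'\<in>PMs T. wt w M' = W'"
        proof -
          obtain M where M: "M \<in> PMs S" "{v,u} \<in> M" "wt w M = W" using cls[rule_format, OF vS uS(1)] uS(2) by auto
          have p: "pmo T (M - {{v,u}})" using pmo_del[of S M "{v,u}"] M unfolding T_def PMs_def by simp
          have "M = insert {v,u} (M - {{v,u}})" using M(2) by auto
          then have "wt w M = w {v,u} + wt w (M - {{v,u}})" using insT[of "M - {{v,u}}"] p by (simp add: PMs_def)
          then show ?thesis using p M(3) unfolding W'_def PMs_def by force
        qed
        have neT: "\<exists>M'\<in>PMs T. wt w M' < W'"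
        proof -
          obtain M where M: "M \<in> PMs S" "{v,u} \<in> M" "wt w M < W" using uU unfolding U_def by blast
          have p: "pmo T (M - {{v,u}})" using pmo_del[of S M "{v,u}"] M unfolding T_def PMs_def by simp
          have "M = insert {v,u} (M - {{v,u}})" using M(2) by auto
          then have "wt w M = w {v,u} + wt w (M - {{v,u}})" using insT[of "M - {{v,u}}"] p by (simp add: PMs_def)
          then show ?thesis using p M(3) unfolding W'_def PMs_def by force
        qed
        have "pc (n - 1) \<le> card {M'\<in>PMs T. wt w M' < W'}"
        proof (cases "\<forall>p\<in>T. \<forall>q\<in>T. p \<noteq> q \<longrightarrow> (\<exists>M\<in>PMs T. {p,q} \<in> M \<and> wt w M = W')")
          case True
          show ?thesis using Suc.IH[OF finT cT leT exT True neT] by simp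
        next
          case False
          then obtain p q where pq: "p \<in> T" "q \<in> T" "p \<noteq> q" "\<not> (\<exists>M\<in>PMs T. {p,q} \<in> M \<and> wt w M = W')" by blast
          have "Cl T {p,q} \<subseteq> {M'\<in>PMs T. wt w M' < W'}"
            using pq(4) leT unfolding Cl_def by force
          moreover have "card (Cl T {p,q}) = pc (n - 1)"
            using card_Cl2[OF finT _ pq(1,2,3), of "n - 1"] cT n1 by simp
          moreover have "finite {M'\<in>PMs T. wt w M' < W'}" using finite_PMs[OF finT] by simp
          ultimately show ?thesis using card_mono by (metis (no_types, lifting))
        qed
        then show ?thesis using eq by simp
      qed
      have "(\<Sum>u\<in>U. card {M\<in>PMs S. wt w M < W \<and> {v,u} \<in> M}) = card (\<Union>u\<in>U. {M\<in>PMs S. wt w M < W \<and> {v,u} \<in> M})"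
      proof (rule card_UN_disjoint[symmetric])
        show "finite U" by (rule finU)
        show "\<forall>i\<in>U. finite {M\<in>PMs S. wt w M < W \<and> {v,i} \<in> M}" using finite_PMs[OF fin] by simp
        show "\<forall>i\<in>U. \<forall>j\<in>U. i \<noteq> j \<longrightarrow> {M\<in>PMs S. wt w M < W \<and> {v,i} \<in> M} \<inter> {M\<in>PMs S. wt w M < W \<and> {v,j} \<in> M} = {}"
          by (auto simp: PMs_def dest: pmo_uniq)
      qed
      also have "\<dots> \<le> card Z"
        using finite_PMs[OF fin] unfolding Z_def by (intro card_mono) auto
      finally have "(\<Sum>u\<in>U. card {M\<in>PMs S. wt w M < W \<and> {v,u} \<in> M}) \<le> card Z" .
      moreover have "(\<Sum>u\<in>U. pc (n - 1)) \<le> (\<Sum>u\<in>U. card {M\<in>PMs S. wt w M < W \<and> {v,u} \<in> M})"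
        using per by (intro sum_mono) simp
      ultimately have "card U * pc (n - 1) \<le> card Z" by simp
      then have "2*n * pc (n - 1) \<le> card Z" using cU by (meson le_trans mult_le_mono1)
      obtain m where m: "n = Suc m" using n1 by (cases n) auto
      have pcn: "pc n = (2*m+1) * pc m" using m by simp
      have pm: "pc m > 0" by (rule pc_pos)
      have "2*n * pc (n - 1) = (2*m+1) * pc m + pc m" using m by simp
      then have "pc n < 2*n * pc (n - 1)" using pcn pm by linarith
      moreover have "pc (Suc n - 1) = pc n" by simp
      ultimately show ?thesis using \<open>2*n * pc (n - 1) \<le> card Z\<close> unfolding Z_def by linarith
    qed
  qed
qed

lemma pm_A:
  fixes w :: "'a set \<Rightarrow> real"
  assumes fin: "finite S" and cS: "card S = 2*Suc n" and le: "\<forall>M\<in>PMs S. wt w M \<le> W"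
    and ex: "\<exists>M\<in>PMs S. wt w M = W" and ne: "\<exists>M\<in>PMs S. wt w M < W"
  shows "pc n \<le> card {M\<in>PMs S. wt w M < W} \<and>
    (card {M\<in>PMs S. wt w M < W} \<le> pc n \<longrightarrow> (\<exists>a\<in>S. \<exists>b\<in>S. a \<noteq> b \<and> {M\<in>PMs S. wt w M < W} = Cl S {a,b}))"
proof (cases "\<forall>p\<in>S. \<forall>q\<in>S. p \<noteq> q \<longrightarrow> (\<exists>M\<in>PMs S. {p,q} \<in> M \<and> wt w M = W)")
  case True
  then show ?thesis using pm_B[OF fin cS le ex True ne] by simp
next
  case False
  then obtain p q where pq: "p \<in> S" "q \<in> S" "p \<noteq> q" "\<not> (\<exists>M\<in>PMs S. {p,q} \<in> M \<and> wt w M = W)" by blast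
  have sub: "Cl S {p,q} \<subseteq> {M\<in>PMs S. wt w M < W}"
    using pq(4) le unfolding Cl_def by force
  have c: "card (Cl S {p,q}) = pc n" using card_Cl2[OF fin cS pq(1,2,3)] .
  have f: "finite {M\<in>PMs S. wt w M < W}" using finite_PMs[OF fin] by simp
  have "pc n \<le> card {M\<in>PMs S. wt w M < W}" using card_mono[OF f sub] c by simp
  moreover have "card {M\<in>PMs S. wt w M < W} \<le> pc n \<longrightarrow> {M\<in>PMs S. wt w M < W} = Cl S {p,q}"
  proof
    assume "card {M\<in>PMs S. wt w M < W} \<le> pc n"
    then have "card (Cl S {p,q}) = card {M\<in>PMs S. wt w M < W}" using card_mono[OF f sub] c by simp
    then show "{M\<in>PMs S. wt w M < W} = Cl S {p,q}" using card_subset_eq[OF f sub] by simp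
  qed
  ultimately show ?thesis using pq by blast
qed


lemma pm_iff:
  assumes ev: "even CARD('v)"
  shows "perfect_matching (M::'v::finite set set) \<longleftrightarrow> pmo UNIV M"
proof -
  have key: "card (\<Union>M) = 2 * card M"
    if c: "\<forall>e\<in>M. card e = 2" and d: "\<forall>e\<in>M. \<forall>f\<in>M. e \<noteq> f \<longrightarrow> e \<inter> f = {}"
  proof -
    have "pairwise disjnt M" using d unfolding pairwise_def disjnt_def by blast
    then have "card (\<Union>M) = sum card M" by (rule card_Union_disjoint) simp
    also have "\<dots> = sum (\<lambda>_. 2) M" using c by (intro sum.cong) auto
    finally show ?thesis by simp
  qed
  show ?thesis
  proof
    assume pm: "perfect_matching M"
    then have c: "\<forall>e\<in>M. card e = 2" and d: "\<forall>e\<in>M. \<forall>f\<in>M. e \<noteq> f \<longrightarrow> e \<inter> f = {}"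
      and cM: "card M = CARD('v) div 2"
      unfolding perfect_matching_def edges_K_def by auto
    have "card (\<Union>M) = CARD('v)" using key[OF c d] cM ev by simp
    then have "\<Union>M = UNIV" using card_subset_eq[of UNIV "\<Union>M"] by simp
    then show "pmo UNIV M" unfolding pmo_def using c d by simp
  next
    assume p: "pmo UNIV M"
    then have c: "\<forall>e\<in>M. card e = 2" and d: "\<forall>e\<in>M. \<forall>f\<in>M. e \<noteq> f \<longrightarrow> e \<inter> f = {}"
      and u: "\<Union>M = UNIV" unfolding pmo_def by auto
    have "card M = CARD('v) div 2" using key[OF c d] u by simp
    then show "perfect_matching M" unfolding perfect_matching_def edges_K_def using c d by auto
  qed
qed

lemma inner_cv: "inner a (char_vec (M::'v::finite set set)) = wt (\<lambda>e. a$e) M"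
proof -
  have "inner a (char_vec M) = (\<Sum>i\<in>UNIV. if i \<in> M then a$i else 0)"
    unfolding inner_vec_def char_vec_def by (intro sum.cong) auto
  also have "\<dots> = sum (\<lambda>i. a$i) (UNIV \<inter> M)" by (rule sum.inter_restrict[symmetric]) simp
  finally show ?thesis by (simp add: wt_def)
qed

lemma cv_inj: "inj_on (char_vec :: 'v::finite set set \<Rightarrow> _) X"
proof (rule inj_onI)
  fix M M' :: "'v set set" assume "char_vec M = char_vec M'"
  then have "\<forall>e. (if e \<in> M then 1 else 0 :: real) = (if e \<in> M' then 1 else 0)"
    unfolding char_vec_def vec_eq_iff by simp
  then show "M = M'" by (metis one_neq_zero subsetI subset_antisym)
qed

lemma cv_comp: "char_vec M $ e = (if e \<in> M then 1 else 0)" unfolding char_vec_def by simp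


theorem lemma9p2:
  fixes F :: "(real ^ ('v::finite set)) set"
  assumes "even CARD('v)"
    and "is_facet F pm_polytope"
    and "\<And>G. is_facet G (pm_polytope :: (real ^ ('v set)) set) \<Longrightarrow>
              card (face_vertices G) \<le> card (face_vertices F)"
  shows "\<exists>e \<in> (edges_K :: 'v set set).
           face_vertices F = char_vec ` {M. perfect_matching M \<and> e \<notin> M}"
proof -
  note ev = assms(1)
  define P :: "(real ^ ('v set)) set" where "P = pm_polytope"
  define V :: "(real ^ ('v set)) set" where "V = pm_vertices"
  have finU: "finite (UNIV :: 'v set)" by simp
  have "CARD('v) > 0" by simp
  then obtain n where cS: "card (UNIV :: 'v set) = 2 * Suc n"
    using ev by (metis dvd_def gr0_conv_Suc mult_0_right not_gr_zero)
  have pmI: "perfect_matching M \<longleftrightarrow> M \<in> PMs UNIV" for M :: "'v set set"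
    using pm_iff[OF ev] by (simp add: PMs_def)
  have Vdef: "V = char_vec ` PMs UNIV" unfolding V_def pm_vertices_def using pmI by auto
  have finPM: "finite (PMs (UNIV :: 'v set))" by (rule finite_PMs[OF finU])
  have finV: "finite V" unfolding Vdef using finPM by simp
  have Pdef: "P = convex hull V" unfolding P_def V_def pm_polytope_def by simp
  have polyP: "polytope P" unfolding Pdef using finV by (rule polytope_convex_hull)
  have convP: "convex P" unfolding Pdef by simp
  have VP: "V \<subseteq> P" unfolding Pdef by (rule hull_subset)
  have cvP: "char_vec M \<in> P" if "M \<in> PMs UNIV" for M using that VP Vdef by auto
  have fvdef: "face_vertices G = G \<inter> V" for G unfolding face_vertices_def V_def by simp
  obtain x y :: 'v where xy: "x \<noteq> y"
  proof -
    obtain x :: 'v where True by simp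
    have "card (UNIV - {x}) \<ge> 1" using cS by (simp add: card_Diff_subset)
    then obtain y where "y \<in> UNIV - {x}" by (metis card.empty empty_iff not_one_le_zero subsetI subset_antisym)
    then show ?thesis using that[of x y] by auto
  qed
  define e0 where "e0 = {x,y}"
  have ce0: "card e0 = 2" using xy unfolding e0_def by simp
  \<comment> \<open>lower bound via the face x_e0 = 0\<close>
  define a0 :: "real ^ ('v set)" where "a0 = - axis e0 1"
  have ia0: "inner a0 z = - z $ e0" for z unfolding a0_def by (simp add: inner_axis')
  have Pge: "P \<subseteq> {z. inner (axis e0 1) z \<ge> 0}"
    unfolding Pdef
  proof (rule hull_minimal)
    show "V \<subseteq> {z. inner (axis e0 (1::real)) z \<ge> 0}" unfolding Vdef by (auto simp: inner_axis' cv_comp)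
    show "convex {z. inner (axis e0 (1::real)) z \<ge> 0}" by (rule convex_halfspace_ge)
  qed
  define G0 where "G0 = P \<inter> {z. inner a0 z = 0}"
  have G0face: "G0 face_of P" unfolding G0_def
  proof (rule face_of_Int_supporting_hyperplane_le[OF convP])
    fix z assume "z \<in> P" then show "inner a0 z \<le> 0" using Pge ia0 by (auto simp: inner_axis')
  qed
  obtain M1 where M1: "M1 \<in> Cl UNIV e0"
  proof -
    have "card (Cl UNIV e0) = pc n" unfolding e0_def using card_Cl2[OF finU cS _ _ xy] by simp
    then have "Cl UNIV e0 \<noteq> {}" using pc_pos[of n] by auto
    then show ?thesis using that by blast
  qed
  have G0P: "G0 \<noteq> P"
  proof
    assume "G0 = P"
    moreover have "char_vec M1 \<in> P" using cvP M1 by (simp add: Cl_def)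
    moreover have "char_vec M1 \<notin> G0" using M1 unfolding G0_def by (simp add: ia0 cv_comp Cl_def)
    ultimately show False by simp
  qed
  define FS where "FS = {G. G face_of P \<and> G \<noteq> P \<and> G0 \<subseteq> G}"
  have finFS: "finite FS" using finite_polytope_faces[OF polyP] unfolding FS_def by (rule finite_subset[rotated]) auto
  have "FS \<noteq> {}" using G0face G0P unfolding FS_def by auto
  then obtain Gm where Gm: "Gm \<in> FS" "\<forall>G\<in>FS. Gm \<le> G \<longrightarrow> Gm = G" using finite_has_maximal[OF finFS] by blast
  have facetGm: "is_facet Gm P" unfolding is_facet_def
  proof (intro conjI allI impI)
    show "Gm face_of P" "Gm \<noteq> P" using Gm(1) unfolding FS_def by auto
    fix G assume G: "G face_of P \<and> G \<noteq> P \<and> Gm \<subseteq> G"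
    then have "G \<in> FS" using Gm(1) unfolding FS_def by auto
    then show "G = Gm" using Gm(2) G by auto
  qed
  have cGm: "card (face_vertices Gm) \<le> card (face_vertices F)" using assms(3) facetGm unfolding P_def by simp
  have subGm: "char_vec ` (PMs UNIV - Cl UNIV e0) \<subseteq> face_vertices Gm"
  proof
    fix z assume "z \<in> char_vec ` (PMs UNIV - Cl UNIV e0)"
    then obtain M where M: "M \<in> PMs UNIV" "e0 \<notin> M" "z = char_vec M" by (auto simp: Cl_def)
    have "z \<in> G0" unfolding G0_def using cvP[OF M(1)] M by (simp add: ia0 cv_comp)
    then have "z \<in> Gm" using Gm(1) unfolding FS_def by auto
    moreover have "z \<in> V" using M Vdef by simp
    ultimately show "z \<in> face_vertices Gm" using fvdef by simp
  qed
  have finfv: "finite (face_vertices G)" for G :: "(real ^ ('v set)) set" unfolding fvdef using finV by (rule finite_Int[OF disjI2])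
  have clow: "pc (Suc n) - pc n \<le> card (face_vertices F)"
  proof -
    have "card (PMs UNIV - Cl UNIV e0) = card (PMs (UNIV::'v set)) - card (Cl UNIV e0)"
      by (rule card_Diff_subset) (use finPM in \<open>auto simp: Cl_def\<close>)
    moreover have "card (PMs (UNIV::'v set)) = pc (Suc n)" using card_PMs[OF finU cS] .
    moreover have "card (Cl UNIV e0) = pc n" unfolding e0_def using card_Cl2[OF finU cS _ _ xy] by simp
    moreover have "card (char_vec ` (PMs UNIV - Cl UNIV e0)) = card (PMs UNIV - Cl UNIV e0)"
      by (rule card_image[OF cv_inj])
    moreover have "card (char_vec ` (PMs UNIV - Cl UNIV e0)) \<le> card (face_vertices Gm)"
      by (rule card_mono[OF finfv subGm])
    ultimately show ?thesis using cGm by simp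
  qed
  have Fface: "F face_of P" and FP: "F \<noteq> P" using assms(2) unfolding is_facet_def P_def by auto
  have "F exposed_face_of P"
    using exposed_face_of_polyhedron[OF polytope_imp_polyhedron[OF polyP]] Fface by simp
  then obtain a b where ab: "P \<subseteq> {z. inner a z \<le> b}" "F = P \<inter> {z. inner a z = b}"
    unfolding exposed_face_of_def by blast
  define w where "w e = a $ e" for e
  have wcv: "inner a (char_vec M) = wt w M" for M unfolding w_def by (rule inner_cv)
  have le: "\<forall>M\<in>PMs UNIV. wt w M \<le> b" using cvP ab(1) wcv by fastforce
  have fvF: "face_vertices F = char_vec ` {M\<in>PMs UNIV. wt w M = b}"
  proof
    show "face_vertices F \<subseteq> char_vec ` {M\<in>PMs UNIV. wt w M = b}"
    proof
      fix z assume "z \<in> face_vertices F"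
      then have "z \<in> F" "z \<in> V" using fvdef by auto
      then obtain M where "M \<in> PMs UNIV" "z = char_vec M" "inner a z = b" using Vdef ab(2) by auto
      then show "z \<in> char_vec ` {M\<in>PMs UNIV. wt w M = b}" using wcv by auto
    qed
    show "char_vec ` {M\<in>PMs UNIV. wt w M = b} \<subseteq> face_vertices F"
    proof
      fix z assume "z \<in> char_vec ` {M\<in>PMs UNIV. wt w M = b}"
      then obtain M where M: "M \<in> PMs UNIV" "wt w M = b" "z = char_vec M" by auto
      then have "z \<in> F" using cvP[OF M(1)] ab(2) wcv by auto
      moreover have "z \<in> V" using M Vdef by auto
      ultimately show "z \<in> face_vertices F" using fvdef by auto
    qed
  qed
  have cfF: "card (face_vertices F) = card {M\<in>PMs UNIV. wt w M = b}"
    unfolding fvF by (rule card_image[OF cv_inj])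
  have e0E: "e0 \<in> edges_K" using ce0 unfolding edges_K_def by simp
  show ?thesis
  proof (cases "{M\<in>PMs UNIV. wt w M = b} = {}")
    case True
    have "card (face_vertices F) = 0" using cfF True by simp
    then have "pc (Suc n) \<le> pc n" using clow by simp
    then have "2*n*pc n \<le> 0" by simp
    then have "n = 0" using pc_pos[of n] by simp
    then have "card (PMs (UNIV::'v set)) = card (Cl UNIV e0)"
      using card_PMs[OF finU cS] card_Cl2[OF finU cS _ _ xy] unfolding e0_def by simp
    then have "PMs UNIV = Cl UNIV e0"
      using card_subset_eq[OF finPM, of "Cl UNIV e0"] by (auto simp: Cl_def)
    then have "{M. perfect_matching M \<and> e0 \<notin> M} = {}" using pmI by (auto simp: Cl_def)
    moreover have "face_vertices F = {}" using fvF True by simp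
    ultimately show ?thesis using e0E by auto
  next
    case False
    then have ex: "\<exists>M\<in>PMs UNIV. wt w M = b" by auto
    have ne: "\<exists>M\<in>PMs UNIV. wt w M < b"
    proof (rule ccontr)
      assume "\<not> ?thesis"
      then have all: "\<forall>M\<in>PMs UNIV. wt w M = b" using le by force
      have "V \<subseteq> F"
      proof
        fix z assume "z \<in> V"
        then obtain M where "M \<in> PMs UNIV" "z = char_vec M" using Vdef by auto
        then show "z \<in> F" using all cvP ab(2) wcv by auto
      qed
      then have "P \<subseteq> F" unfolding Pdef using face_of_imp_convex[OF Fface] by (rule hull_minimal)
      then show False using FP face_of_imp_subset[OF Fface] by auto
    qed
    note AA = pm_A[OF finU cS le ex ne]
    define Z where "Z = {M\<in>PMs (UNIV::'v set). wt w M < b}"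
    have part: "{M\<in>PMs (UNIV::'v set). wt w M = b} = PMs UNIV - Z" unfolding Z_def using le by force
    have "card {M\<in>PMs (UNIV::'v set). wt w M = b} = card (PMs (UNIV::'v set)) - card Z"
      unfolding part by (rule card_Diff_subset) (use finPM in \<open>auto simp: Z_def\<close>)
    moreover have "card (PMs (UNIV::'v set)) = pc (Suc n)" using card_PMs[OF finU cS] .
    moreover have "card Z \<le> card (PMs (UNIV::'v set))" unfolding Z_def using finPM by (intro card_mono) auto
    moreover have "pc n \<le> pc (Suc n)" by simp
    ultimately have "card Z \<le> pc n" using clow cfF by linarith
    then obtain p q where pq: "p \<noteq> q" "Z = Cl UNIV {p,q}" using AA unfolding Z_def by blast
    have "{M\<in>PMs (UNIV::'v set). wt w M = b} = {M. perfect_matching M \<and> {p,q} \<notin> M}"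
      unfolding part pq(2) using pmI by (auto simp: Cl_def)
    moreover have "{p,q} \<in> edges_K" using pq(1) unfolding edges_K_def by simp
    ultimately show ?thesis using fvF by auto
  qed
qed

end
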